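(* Let $Y$ be a normed linear space, $F\subset\mathbb R^n$ and $x\in F\cap\operatorname{der}F$. If $f\colon F\to Y$ is relatively strictly differentiable at $x$ and $\operatorname{Ptg}(F,x)$ spans $\mathbb R^n$, then the relative strict derivative of $f$ at $x$ is determined uniquely.
   Context: $\operatorname{der}F$ is the set of accumulation points of $F$. $\operatorname{Ptg}(F,x)$ is the set of $v\in\mathbb R^n$ for which there are $x_k,y_k\in F$, $\alpha_k\in\mathbb R$ with $x_k\to x$, $y_k\to x$, $\alpha_k(y_k-x_k)\to v$. $L\in\mathcal L(\mathbb R^n,Y)$ is a relative strict derivative of $f$ at $x$ if $x$ is isolated in $F$ or $\|f(y)-f(z)-L(y-z)\|/|y-z|\to0$ as $y,z\to x$, $y,z\in F$, $y\ne z$ (with $y=x$ or $z=x$ allowed); $f$ is relatively strictly differentiable at $x$ if such $L$ exists. *)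

theory Defs
  imports "HOL-Analysis.Analysis"
begin

definition der :: "'a::topological_space set \<Rightarrow> 'a set" where
  "der F = {x. x islimpt F}"

definition Ptg :: "'a::real_normed_vector set \<Rightarrow> 'a \<Rightarrow> 'a set" where
  "Ptg F x = {v. \<exists>xk yk (\<alpha>k::nat \<Rightarrow> real).
      (\<forall>k. xk k \<in> F \<and> yk k \<in> F) \<and> xk \<longlonglongrightarrow> x \<and> yk \<longlonglongrightarrow> x \<and>
      (\<lambda>k. \<alpha>k k *\<^sub>R (yk k - xk k)) \<longlonglongrightarrow> v}"

definition rel_strict_deriv ::
  "'a::euclidean_space set \<Rightarrow> ('a \<Rightarrow> 'b::real_normed_vector) \<Rightarrow> 'a \<Rightarrow> ('a \<Rightarrow> 'b) \<Rightarrow> bool" where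
  "rel_strict_deriv F f x L \<longleftrightarrow> linear L \<and>
     ((x \<in> F \<and> \<not> x islimpt F) \<or>
      ((\<lambda>(y, z). norm (f y - f z - L (y - z)) / norm (y - z)) \<longlongrightarrow> 0)
        (at (x, x) within {(y, z). y \<in> F \<and> z \<in> F \<and> y \<noteq> z}))"

definition rel_strict_differentiable ::
  "'a::euclidean_space set \<Rightarrow> ('a \<Rightarrow> 'b::real_normed_vector) \<Rightarrow> 'a \<Rightarrow> bool" where
  "rel_strict_differentiable F f x \<longleftrightarrow> (\<exists>L. rel_strict_deriv F f x L)"

end

theory Submission
  imports Defs
begin

lemma key:
  fixes F :: "'a::euclidean_space set" and D :: "'a \<Rightarrow> 'b::real_normed_vector"
  assumes lin: "linear D"
    and lim: "((\<lambda>(y, z). norm (D (y - z)) / norm (y - z)) \<longlongrightarrow> 0)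
        (at (x, x) within {(y, z). y \<in> F \<and> z \<in> F \<and> y \<noteq> z})"
    and v: "v \<in> Ptg F x"
  shows "D v = 0"
proof -
  obtain xk yk and ak :: "nat \<Rightarrow> real" where
    mem: "\<forall>k. xk k \<in> F \<and> yk k \<in> F" and xk: "xk \<longlonglongrightarrow> x" and yk: "yk \<longlonglongrightarrow> x"
    and av: "(\<lambda>k. ak k *\<^sub>R (yk k - xk k)) \<longlonglongrightarrow> v"
    using v unfolding Ptg_def by blast
  define S where "S = {(y, z). y \<in> F \<and> z \<in> F \<and> y \<noteq> z}"
  define g where "g = (\<lambda>(y, z). norm (D (y - z)) / norm (y - z))"
  define h where "h k = (if yk k = xk k then 0 else g (yk k, xk k))" for k
  have pr: "(\<lambda>k. (yk k, xk k)) \<longlonglongrightarrow> (x, x)" using yk xk by (rule tendsto_Pair)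
  have h0: "h \<longlonglongrightarrow> 0"
  proof (rule tendstoI)
    fix e :: real assume e: "e > 0"
    have "eventually (\<lambda>p. dist (g p) 0 < e) (at (x, x) within S)"
      using tendstoD[OF lim[folded S_def g_def] e] .
    then obtain d where d: "d > 0"
      and dd: "\<And>p. p \<in> S \<Longrightarrow> p \<noteq> (x, x) \<Longrightarrow> dist p (x, x) < d \<Longrightarrow> dist (g p) 0 < e"
      unfolding eventually_at by blast
    have "eventually (\<lambda>k. dist (yk k, xk k) (x, x) < d) sequentially"
      using tendstoD[OF pr d] .
    then show "eventually (\<lambda>k. dist (h k) 0 < e) sequentially"
    proof (rule eventually_mono)
      fix k assume k: "dist (yk k, xk k) (x, x) < d"
      show "dist (h k) 0 < e"
      proof (cases "yk k = xk k")
        case True then show ?thesis using e by (simp add: h_def)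
      next
        case False
        then have "(yk k, xk k) \<in> S" using mem by (auto simp: S_def)
        moreover have "(yk k, xk k) \<noteq> (x, x)" using False by auto
        ultimately show ?thesis using dd k False by (simp add: h_def)
      qed
    qed
  qed
  have eq: "norm (D (ak k *\<^sub>R (yk k - xk k))) = h k * norm (ak k *\<^sub>R (yk k - xk k))" for k
  proof (cases "yk k = xk k")
    case True then show ?thesis using linear_0[OF lin] by (simp add: h_def)
  next
    case False
    then have "norm (yk k - xk k) \<noteq> 0" by simp
    then show ?thesis using False
      by (simp add: h_def g_def linear_scale[OF lin])
  qed
  have "(\<lambda>k. h k * norm (ak k *\<^sub>R (yk k - xk k))) \<longlonglongrightarrow> 0 * norm v"
    by (intro tendsto_mult h0 tendsto_norm av)
  then have "(\<lambda>k. norm (D (ak k *\<^sub>R (yk k - xk k)))) \<longlonglongrightarrow> 0"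
    by (simp add: eq)
  then have z: "(\<lambda>k. D (ak k *\<^sub>R (yk k - xk k))) \<longlonglongrightarrow> 0"
    by (simp add: tendsto_norm_zero_iff)
  have c: "(\<lambda>k. D (ak k *\<^sub>R (yk k - xk k))) \<longlonglongrightarrow> D v"
    using linear_continuous_at[OF lin[unfolded linear_conv_bounded_linear]] av by (rule isCont_tendsto_compose)
  show ?thesis using LIMSEQ_unique[OF c z] .
qed

theorem lemmaB2:
  fixes F :: "'a::euclidean_space set" and f :: "'a \<Rightarrow> 'b::real_normed_vector" and x :: 'a
  assumes "x \<in> F \<inter> der F"
    and "rel_strict_differentiable F f x"
    and "span (Ptg F x) = UNIV"
  shows "\<exists>!L. rel_strict_deriv F f x L"
proof -
  obtain L where L: "rel_strict_deriv F f x L"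
    using assms(2) unfolding rel_strict_differentiable_def by blast
  have lp: "x islimpt F" using assms(1) by (simp add: der_def)
  define S where "S = {(y, z). y \<in> F \<and> z \<in> F \<and> y \<noteq> z}"
  have uniq: "L1 = L2" if L1: "rel_strict_deriv F f x L1" and L2: "rel_strict_deriv F f x L2" for L1 L2
  proof -
    have l1: "linear L1" and t1: "((\<lambda>(y, z). norm (f y - f z - L1 (y - z)) / norm (y - z)) \<longlongrightarrow> 0) (at (x, x) within S)"
      using L1 lp unfolding rel_strict_deriv_def S_def by auto
    have l2: "linear L2" and t2: "((\<lambda>(y, z). norm (f y - f z - L2 (y - z)) / norm (y - z)) \<longlongrightarrow> 0) (at (x, x) within S)"
      using L2 lp unfolding rel_strict_deriv_def S_def by auto
    define D where "D = (\<lambda>u. L1 u - L2 u)"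
    have lD: "linear D" unfolding D_def using l1 l2 by (rule linear_compose_sub)
    have tD: "((\<lambda>(y, z). norm (D (y - z)) / norm (y - z)) \<longlongrightarrow> 0) (at (x, x) within S)"
    proof (rule tendsto_sandwich[where f="\<lambda>_. 0"])
      show "eventually (\<lambda>p. 0 \<le> (case p of (y, z) \<Rightarrow> norm (D (y - z)) / norm (y - z))) (at (x, x) within S)"
        by (auto split: prod.splits)
      show "eventually (\<lambda>p. (case p of (y, z) \<Rightarrow> norm (D (y - z)) / norm (y - z)) \<le>
          (case p of (y, z) \<Rightarrow> norm (f y - f z - L1 (y - z)) / norm (y - z)) +
          (case p of (y, z) \<Rightarrow> norm (f y - f z - L2 (y - z)) / norm (y - z))) (at (x, x) within S)"
      proof (rule always_eventually, clarify)
        fix y z :: 'a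
        have "norm (D (y - z)) \<le> norm (f y - f z - L1 (y - z)) + norm (f y - f z - L2 (y - z))"
        proof -
          have "D (y - z) = (f y - f z - L2 (y - z)) - (f y - f z - L1 (y - z))"
            by (simp add: D_def)
          then show ?thesis by (metis add.commute norm_triangle_ineq4)
        qed
        then show "norm (D (y - z)) / norm (y - z) \<le>
           norm (f y - f z - L1 (y - z)) / norm (y - z) + norm (f y - f z - L2 (y - z)) / norm (y - z)"
          by (simp add: add_divide_distrib[symmetric] divide_right_mono)
      qed
      show "((\<lambda>_. 0::real) \<longlongrightarrow> 0) (at (x, x) within S)" by simp
      show "((\<lambda>p. (case p of (y, z) \<Rightarrow> norm (f y - f z - L1 (y - z)) / norm (y - z)) +
          (case p of (y, z) \<Rightarrow> norm (f y - f z - L2 (y - z)) / norm (y - z))) \<longlongrightarrow> 0) (at (x, x) within S)"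
        using tendsto_add[OF t1 t2] by simp
    qed
    have "\<forall>v\<in>Ptg F x. D v = 0" using key[OF lD tD[unfolded S_def]] by blast
    then have "\<forall>v\<in>span (Ptg F x). D v = 0"
      using linear_eq_0_on_span[OF lD] by blast
    then have "\<And>u. D u = 0" using assms(3) by auto
    then show "L1 = L2" by (auto simp: D_def fun_eq_iff)
  qed
  show ?thesis using L uniq by blast
qed

end
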